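(* For $\tau>0$ let $\theta\sim HS(\tau)$ and $X\mid\theta\sim\mathcal N(\theta,1/n)$. There is a constant $C>0$ such that for all $n\ge1$, $t\in\mathbb R$, $\theta_0\in\mathbb R$ and $\tau>0$, $$E_{\theta_0}E\big[e^{t\sqrt n(\theta-X)}\,\big|\,X\big]\le C\,\frac{\tau\sqrt n}{\log\big(1+\frac{4\tau^2}{(|\theta_0|+1)^2}\big)}\,e^{t^2/2},$$ where the inner expectation is with respect to the posterior of $\theta$ given $X$ under the prior $HS(\tau)$.
   Context: $HS(\tau)$ (horseshoe distribution) is the law of $\theta$ where $\lambda\sim C^+(0,1)$ (standard half-Cauchy) and $\theta\mid\lambda\sim\mathcal N(0,\tau^2\lambda^2)$; its density $h_\tau$ satisfies $\frac{1}{(2\pi)^{3/2}\tau}\log(1+\frac{4\tau^2}{t^2})\le h_\tau(t)\le\frac{1}{(2\pi)^{3/2}\tau}\log(1+\frac{2\tau^2}{t^2})$ for $t\ne0$. $E_{\theta_0}$ denotes expectation over $X\sim\mathcal N(\theta_0,1/n)$. *)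

theory Defs
  imports "HOL-Probability.Probability"
begin

definition half_cauchy_density :: "real \<Rightarrow> real" where
  "half_cauchy_density l = (if 0 < l then 2 / (pi * (1 + l\<^sup>2)) else 0)"

definition hs_density :: "real \<Rightarrow> real \<Rightarrow> ennreal" where
  "hs_density \<tau> th =
     (\<integral>\<^sup>+ l. ennreal (half_cauchy_density l * normal_density 0 (\<tau> * l) th) \<partial>lborel)"

definition lik :: "nat \<Rightarrow> real \<Rightarrow> real \<Rightarrow> real" where
  "lik n th x = normal_density th (1 / sqrt (real n)) x"

text \<open>Posterior expectation E[f(theta) | X = x] under prior HS(tau),
  f nonnegative: ratio of integrals against prior density times likelihood.\<close>
definition post_expect :: "nat \<Rightarrow> real \<Rightarrow> (real \<Rightarrow> real) \<Rightarrow> real \<Rightarrow> ennreal" where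
  "post_expect n \<tau> f x =
     (\<integral>\<^sup>+ th. ennreal (f th) * hs_density \<tau> th * ennreal (lik n th x) \<partial>lborel) /
     (\<integral>\<^sup>+ th. hs_density \<tau> th * ennreal (lik n th x) \<partial>lborel)"

end

theory Submission
  imports Defs begin

lemma nd_mass: "0 < \<sigma> \<Longrightarrow> (\<integral>\<^sup>+x. ennreal (normal_density \<mu> \<sigma> x) \<partial>lborel) = 1"
proof -
  assume s: "0 < \<sigma>"
  interpret prob_space "density lborel (normal_density \<mu> \<sigma>)"
    using prob_space_normal_density[OF s] .
  have "emeasure (density lborel (normal_density \<mu> \<sigma>)) UNIV = 1"
    using emeasure_space_1 by simp
  then show ?thesis by (simp add: emeasure_density)
qed

lemma hc_measurable[measurable]: "half_cauchy_density \<in> borel_measurable borel"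
  unfolding half_cauchy_density_def[abs_def] by measurable

lemma hc_mass: "(\<integral>\<^sup>+l. ennreal (half_cauchy_density l) \<partial>lborel) \<le> 1"
proof -
  have "(\<integral>\<^sup>+l. ennreal (half_cauchy_density l) \<partial>lborel)
     \<le> (\<integral>\<^sup>+l. ennreal (2 / (pi * (1 + l\<^sup>2))) * indicator {0..} l \<partial>lborel)"
    by (intro nn_integral_mono) (auto simp: half_cauchy_density_def indicator_def)
  also have "\<dots> = ennreal (1 - 2 / pi * arctan 0)"
  proof (rule nn_integral_FTC_atLeast)
    show "(\<lambda>l. 2 / (pi * (1 + l\<^sup>2))) \<in> borel_measurable borel" by measurable
    fix x :: real
    show "((\<lambda>l. 2 / pi * arctan l) has_real_derivative 2 / (pi * (1 + x\<^sup>2))) (at x)"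
    proof -
      have p: "pi + pi * x\<^sup>2 > 0" by (simp add: add_pos_nonneg)
      show ?thesis by (rule derivative_eq_intros refl)+ (use p in \<open>simp add: field_simps\<close>)
    qed
    show "0 \<le> 2 / (pi * (1 + x\<^sup>2))" by (simp add: add_pos_nonneg)
  next
    show "((\<lambda>l. 2 / pi * arctan l) \<longlongrightarrow> 1) at_top"
      using tendsto_mult[OF tendsto_const tendsto_arctan_at_top, of "2/pi"] by simp
  qed
  finally show ?thesis by simp
qed

lemma hs_measurable[measurable]: "(\<lambda>th. hs_density \<tau> th) \<in> borel_measurable borel"
  unfolding hs_density_def normal_density_def by measurable

lemma hs_mass: assumes "0 < \<tau>" shows "(\<integral>\<^sup>+th. hs_density \<tau> th \<partial>lborel) \<le> 1"
proof -
  have "(\<integral>\<^sup>+th. hs_density \<tau> th \<partial>lborel) =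
    (\<integral>\<^sup>+th. (\<integral>\<^sup>+l. ennreal (half_cauchy_density l * normal_density 0 (\<tau> * l) th) \<partial>lborel) \<partial>lborel)"
    by (simp add: hs_density_def)
  also have "\<dots> = (\<integral>\<^sup>+l. (\<integral>\<^sup>+th. ennreal (half_cauchy_density l * normal_density 0 (\<tau> * l) th) \<partial>lborel) \<partial>lborel)"
    by (rule lborel_pair.Fubini') (unfold normal_density_def, measurable)
  also have "\<dots> = (\<integral>\<^sup>+l. ennreal (half_cauchy_density l) \<partial>lborel)"
  proof (rule nn_integral_cong)
    fix l :: real
    show "(\<integral>\<^sup>+th. ennreal (half_cauchy_density l * normal_density 0 (\<tau> * l) th) \<partial>lborel) = ennreal (half_cauchy_density l)"
    proof (cases "0 < l")
      case True
      have "(\<integral>\<^sup>+th. ennreal (half_cauchy_density l * normal_density 0 (\<tau> * l) th) \<partial>lborel)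
         = ennreal (half_cauchy_density l) * (\<integral>\<^sup>+th. ennreal (normal_density 0 (\<tau> * l) th) \<partial>lborel)"
        by (subst nn_integral_cmult[symmetric]) (auto simp: ennreal_mult half_cauchy_density_def)
      also have "\<dots> = ennreal (half_cauchy_density l)"
        using nd_mass[of "\<tau> * l" 0] True assms by simp
      finally show ?thesis .
    next
      case False
      then show ?thesis by (simp add: half_cauchy_density_def)
    qed
  qed
  also have "\<dots> \<le> 1" by (rule hc_mass)
  finally show ?thesis .
qed

lemma lik_nonneg[simp]: "0 \<le> lik n th x"
  by (simp add: lik_def)

lemma mgf_pt:
  assumes "1 \<le> n"
  shows "exp (t * sqrt (real n) * (th - x)) * lik n th x = exp (t\<^sup>2 / 2) * normal_density (th - t / sqrt (real n)) (1 / sqrt (real n)) x"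
proof -
  have n: "sqrt (real n) > 0" "(sqrt (real n))\<^sup>2 = real n" using assms by auto
  have "t * sqrt (real n) * (th - x) + (- (x - th)\<^sup>2 / (2 * (1 / sqrt (real n))\<^sup>2))
     = t\<^sup>2 / 2 + (- (x - (th - t / sqrt (real n)))\<^sup>2 / (2 * (1 / sqrt (real n))\<^sup>2))"
    using n by (simp add: field_simps power2_eq_square)
  then show ?thesis
    unfolding lik_def normal_density_def
    by (simp add: exp_add[symmetric] algebra_simps)
qed

lemma mgf:
  assumes "1 \<le> n"
  shows "(\<integral>\<^sup>+x. ennreal (exp (t * sqrt (real n) * (th - x))) * ennreal (lik n th x) \<partial>lborel) = ennreal (exp (t\<^sup>2 / 2))"
proof -
  have "(\<integral>\<^sup>+x. ennreal (exp (t * sqrt (real n) * (th - x))) * ennreal (lik n th x) \<partial>lborel)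
     = (\<integral>\<^sup>+x. ennreal (exp (t\<^sup>2 / 2)) * ennreal (normal_density (th - t / sqrt (real n)) (1 / sqrt (real n)) x) \<partial>lborel)"
    by (intro nn_integral_cong) (simp add: ennreal_mult[symmetric] mgf_pt[OF assms])
  also have "\<dots> = ennreal (exp (t\<^sup>2 / 2))"
    using assms by (subst nn_integral_cmult) (auto simp: nd_mass)
  finally show ?thesis .
qed

lemma hs_lower:
  assumes tau: "0 < \<tau>" and b: "0 < b" and th: "\<bar>th\<bar> \<le> \<tau> * b"
  shows "ennreal (exp (-1/2) / (pi * sqrt (2 * pi) * \<tau>) * ln (1 + 1 / b\<^sup>2)) \<le> hs_density \<tau> th"
proof -
  define K0 where "K0 = 2 * exp (-1/2) / (pi * sqrt (2 * pi) * \<tau>)"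
  have K0: "0 < K0" using tau by (simp add: K0_def)
  have "ennreal (exp (-1/2) / (pi * sqrt (2 * pi) * \<tau>) * ln (1 + 1 / b\<^sup>2))
      = ennreal (0 - (- K0 / 2 * ln (1 + 1 / b\<^sup>2)))"
    by (simp add: K0_def)
  also have "\<dots> = (\<integral>\<^sup>+l. ennreal (K0 / (l * (1 + l\<^sup>2))) * indicator {b..} l \<partial>lborel)"
  proof (rule nn_integral_FTC_atLeast[symmetric])
    show "(\<lambda>l. K0 / (l * (1 + l\<^sup>2))) \<in> borel_measurable borel" by measurable
    fix x :: real assume x: "b \<le> x"
    then have xp: "0 < x" using b by simp
    have p: "0 < 1 + x\<^sup>2" by (simp add: add_pos_nonneg)
    show "0 \<le> K0 / (x * (1 + x\<^sup>2))" using K0 xp p by simp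
    have p2: "0 < 1 + 1 / x\<^sup>2" using xp by (simp add: add_pos_nonneg)
    show "((\<lambda>l. - K0 / 2 * ln (1 + 1 / l\<^sup>2)) has_real_derivative K0 / (x * (1 + x\<^sup>2))) (at x)"
    proof -
      have d1: "0 < x + x * (x * x)" "0 < x * (x * (x * 4)) + x * (x * (x * (x * (x * 4))))"
        using xp by (simp_all add: add_pos_pos)
      show ?thesis
        using xp p p2 d1 by (auto intro!: derivative_eq_intros simp: field_simps power2_eq_square power3_eq_cube)
    qed
  next
    have "filterlim (\<lambda>l::real. l ^ 2) at_top at_top"
      by (intro filterlim_pow_at_top filterlim_ident) auto
    then have "((\<lambda>l::real. 1 / l\<^sup>2) \<longlongrightarrow> 0) at_top"
      by (intro tendsto_divide_0[OF tendsto_const] filterlim_at_top_imp_at_infinity)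
    then have "((\<lambda>l::real. 1 + 1 / l\<^sup>2) \<longlongrightarrow> 1 + 0) at_top"
      by (intro tendsto_add tendsto_const)
    then have "((\<lambda>l::real. ln (1 + 1 / l\<^sup>2)) \<longlongrightarrow> ln (1 + 0)) at_top"
      by (rule tendsto_ln) simp
    then have "((\<lambda>l. - K0 / 2 * ln (1 + 1 / l\<^sup>2)) \<longlongrightarrow> - K0 / 2 * ln (1 + 0)) at_top"
      by (intro tendsto_mult tendsto_const)
    then show "((\<lambda>l. - K0 / 2 * ln (1 + 1 / l\<^sup>2)) \<longlongrightarrow> 0) at_top" by simp
  qed
  also have "\<dots> \<le> hs_density \<tau> th"
    unfolding hs_density_def
  proof (rule nn_integral_mono)
    fix l :: real
    show "ennreal (K0 / (l * (1 + l\<^sup>2))) * indicator {b..} l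
        \<le> ennreal (half_cauchy_density l * normal_density 0 (\<tau> * l) th)"
    proof (cases "b \<le> l")
      case False then show ?thesis by simp
    next
      case True
      then have lp: "0 < l" using b by simp
      have p: "0 < 1 + l\<^sup>2" by (simp add: add_pos_nonneg)
      have "th\<^sup>2 \<le> (\<tau> * l)\<^sup>2"
      proof -
        have "\<bar>th\<bar> \<le> \<tau> * l" using th True tau by (smt (verit) mult_left_mono)
        then show ?thesis by (metis abs_ge_zero power2_abs power_mono)
      qed
      then have q: "th\<^sup>2 / (2 * (\<tau> * l)\<^sup>2) \<le> 1/2" using tau lp by (simp add: field_simps)
      have e: "exp (-1/2) \<le> exp (- (th - 0)\<^sup>2 / (2 * (\<tau> * l)\<^sup>2))" using q by simp
      have sq: "sqrt (2 * pi * (\<tau> * l)\<^sup>2) = sqrt (2 * pi) * \<tau> * l"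
        using tau lp by (simp add: real_sqrt_mult)
      have "K0 / (l * (1 + l\<^sup>2)) = 2 / (pi * (1 + l\<^sup>2)) * (1 / (sqrt (2 * pi) * \<tau> * l) * exp (-1/2))"
        unfolding K0_def using tau lp p by (simp add: field_simps)
      also have "\<dots> \<le> 2 / (pi * (1 + l\<^sup>2)) * (1 / (sqrt (2 * pi) * \<tau> * l) * exp (- (th - 0)\<^sup>2 / (2 * (\<tau> * l)\<^sup>2)))"
        using e tau lp p by (intro mult_left_mono) auto
      also have "\<dots> = half_cauchy_density l * normal_density 0 (\<tau> * l) th"
        unfolding half_cauchy_density_def normal_density_def sq using lp by simp
      finally show ?thesis using True by (simp add: ennreal_leI)
    qed
  qed
  finally show ?thesis .
qed

lemma marg_lower:
  assumes n: "1 \<le> n" and tau: "0 < \<tau>"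
  shows "ennreal (exp (-1) / (pi\<^sup>2 * \<tau>) * ln (1 + \<tau>\<^sup>2 / (\<bar>x\<bar> + 1)\<^sup>2))
     \<le> (\<integral>\<^sup>+th. hs_density \<tau> th * ennreal (lik n th x) \<partial>lborel)"
proof -
  define b where "b = (\<bar>x\<bar> + 1) / \<tau>"
  define d where "d = 1 / sqrt (real n)"
  define A where "A = exp (-1/2) / (pi * sqrt (2 * pi) * \<tau>) * ln (1 + 1 / b\<^sup>2)"
  define B where "B = sqrt (real n) / sqrt (2 * pi) * exp (-1/2)"
  have sn: "0 < sqrt (real n)" "1 \<le> sqrt (real n)" "(sqrt (real n))\<^sup>2 = real n" using n by auto
  have bp: "0 < b" using tau by (simp add: b_def add_pos_nonneg)
  have dp: "0 < d" "d \<le> 1" using sn by (auto simp: d_def)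
  have A0: "0 \<le> A" using bp tau by (simp add: A_def)
  have B0: "0 \<le> B" by (simp add: B_def)
  have bb: "1 / b\<^sup>2 = \<tau>\<^sup>2 / (\<bar>x\<bar> + 1)\<^sup>2" using tau by (simp add: b_def power_divide)
  have "exp (-1) / (pi\<^sup>2 * \<tau>) * ln (1 + \<tau>\<^sup>2 / (\<bar>x\<bar> + 1)\<^sup>2) = A * B * (2 * d)"
  proof -
    have e: "exp (-1::real) = exp (-1/2) * exp (-1/2)" by (simp add: exp_add[symmetric])
    have s2: "sqrt (2 * pi) * sqrt (2 * pi) = 2 * pi" by simp
    show ?thesis unfolding A_def B_def d_def bb[symmetric] e using sn tau
      by (simp add: field_simps power2_eq_square s2)
  qed
  then have "ennreal (exp (-1) / (pi\<^sup>2 * \<tau>) * ln (1 + \<tau>\<^sup>2 / (\<bar>x\<bar> + 1)\<^sup>2))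
      = ennreal (A * B) * emeasure lborel {x - d..x + d}"
    using dp A0 B0 by (simp add: ennreal_mult[symmetric])
  also have "\<dots> = (\<integral>\<^sup>+th. ennreal (A * B) * indicator {x - d..x + d} th \<partial>lborel)"
    by (simp add: nn_integral_cmult_indicator)
  also have "\<dots> \<le> (\<integral>\<^sup>+th. hs_density \<tau> th * ennreal (lik n th x) \<partial>lborel)"
  proof (rule nn_integral_mono)
    fix th :: real
    show "ennreal (A * B) * indicator {x - d..x + d} th \<le> hs_density \<tau> th * ennreal (lik n th x)"
    proof (cases "th \<in> {x - d..x + d}")
      case False then show ?thesis by simp
    next
      case True
      then have td: "\<bar>x - th\<bar> \<le> d" by auto
      have "\<bar>th\<bar> \<le> \<tau> * b" using td dp tau by (simp add: b_def)
      then have hA: "ennreal A \<le> hs_density \<tau> th"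
        unfolding A_def using hs_lower[OF tau bp] by simp
      have "(x - th)\<^sup>2 \<le> d\<^sup>2" using td by (metis abs_ge_zero power2_abs power_mono)
      then have "(x - th)\<^sup>2 * real n \<le> 1" using sn by (simp add: d_def power_divide field_simps)
      then have q: "- (x - th)\<^sup>2 / (2 * (1 / sqrt (real n))\<^sup>2) \<ge> -1/2"
        using sn by (simp add: power_divide field_simps)
      have l: "lik n th x = sqrt (real n) / sqrt (2 * pi) * exp (- (x - th)\<^sup>2 / (2 * (1 / sqrt (real n))\<^sup>2))"
        unfolding lik_def normal_density_def using sn
        by (simp add: real_sqrt_mult real_sqrt_divide power_divide)
      have "B \<le> lik n th x" unfolding l B_def using q by (intro mult_left_mono) auto
      then have lB: "ennreal B \<le> ennreal (lik n th x)" by (rule ennreal_leI)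
      have "ennreal (A * B) = ennreal A * ennreal B" using A0 B0 by (simp add: ennreal_mult)
      also have "\<dots> \<le> hs_density \<tau> th * ennreal (lik n th x)"
        by (intro mult_mono hA lB) auto
      finally show ?thesis using True by simp
    qed
  qed
  finally show ?thesis .
qed

lemma R1: fixes s :: real assumes "0 \<le> s" shows "ln (1 + 4 * s) \<le> 4 * ln (1 + s)"
proof -
  have "1 + real 4 * s \<le> (1 + s) ^ 4" by (rule Bernoulli_inequality) (use assms in simp)
  then have "ln (1 + 4 * s) \<le> ln ((1 + s) ^ 4)" using assms by (subst ln_le_cancel_iff) auto
  also have "\<dots> = 4 * ln (1 + s)" using assms by (simp add: ln_realpow)
  finally show ?thesis .
qed

lemma R2: fixes l s :: real assumes l: "1 \<le> l" and s: "0 \<le> s" shows "ln (1 + l * s) \<le> l * ln (1 + s)"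
proof -
  define g where "g = (\<lambda>m. m * ln (1 + s) - ln (1 + m * s))"
  have "g 1 \<le> g l"
  proof (rule DERIV_nonneg_imp_increasing_open[OF l])
    fix m :: real assume m: "1 < m" "m < l"
    have p: "0 < 1 + m * s" using m s by (simp add: add_pos_nonneg)
    have d: "(g has_real_derivative (ln (1 + s) - s / (1 + m * s))) (at m)"
      unfolding g_def using p by (auto intro!: derivative_eq_intros)
    have "ln (1 / (1 + s)) \<le> 1 / (1 + s) - 1" using s by (intro ln_le_minus_one) simp
    then have "s / (1 + s) \<le> ln (1 + s)" using s by (simp add: ln_div field_simps)
    moreover have "s / (1 + m * s) \<le> s / (1 + s)"
      using s m mult_right_mono[of 1 m s] by (intro divide_left_mono) (auto simp: add_pos_nonneg)
    ultimately show "\<exists>y. (g has_real_derivative y) (at m) \<and> 0 \<le> y" using d by force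
  next
    show "continuous_on {1..l} g" unfolding g_def using s
      by (intro continuous_intros) (auto; smt (verit) mult_nonneg_nonneg)
  qed
  then show ?thesis by (simp add: g_def)
qed

lemma R3: fixes D :: real shows "(1 + D)\<^sup>2 * exp (- D\<^sup>2 / 2) \<le> (4::real)"
proof -
  have "(1 + D)\<^sup>2 \<le> 4 * (1 + D\<^sup>2 / 2)" 
  proof -
    have "0 \<le> (D - 1) * (D - 1)" by simp
    then show ?thesis by (simp add: power2_eq_square algebra_simps)
  qed
  also have "\<dots> \<le> 4 * exp (D\<^sup>2 / 2)" by (rule mult_left_mono) (use exp_ge_add_one_self[of "D\<^sup>2 / 2"] in auto)
  finally have "(1 + D)\<^sup>2 * exp (- D\<^sup>2 / 2) \<le> 4 * exp (D\<^sup>2 / 2) * exp (- D\<^sup>2 / 2)"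
    by (intro mult_right_mono) auto
  also have "\<dots> = 4" by (simp add: exp_add[symmetric])
  finally show ?thesis .
qed

lemma real_key:
  assumes n: "1 \<le> n" and tau: "0 < \<tau>"
  shows "ln (1 + 4 * \<tau>\<^sup>2 / (\<bar>t0\<bar> + 1)\<^sup>2) * exp (- (x - t0)\<^sup>2 / (2 * (1 / sqrt (real n))\<^sup>2))
     \<le> 16 * ln (1 + \<tau>\<^sup>2 / (\<bar>x\<bar> + 1)\<^sup>2)"
proof -
  define u where "u = \<tau>\<^sup>2"
  define y where "y = (\<bar>t0\<bar> + 1)\<^sup>2"
  define z where "z = (\<bar>x\<bar> + 1)\<^sup>2"
  define D where "D = \<bar>x - t0\<bar>"
  have u: "0 \<le> u" and y: "0 < y" and z: "0 < z" and D: "0 \<le> D"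
    by (auto simp: u_def y_def z_def D_def add_pos_nonneg)
  have Lx: "0 \<le> ln (1 + u / z)" using u z by simp
  have E: "exp (- (x - t0)\<^sup>2 / (2 * (1 / sqrt (real n))\<^sup>2)) \<le> exp (- D\<^sup>2 / 2)"
  proof -
    have "(x - t0)\<^sup>2 \<le> real n * (x - t0)\<^sup>2"
      using mult_right_mono[of 1 "real n" "(x - t0)\<^sup>2"] n by simp
    then show ?thesis using n by (simp add: D_def power_divide field_simps)
  qed
  have r1: "ln (1 + 4 * u / y) \<le> 4 * ln (1 + u / y)" using R1[of "u / y"] u y by simp
  have zy: "z \<le> y * (1 + D)\<^sup>2"
  proof -
    have "\<bar>x\<bar> + 1 \<le> (\<bar>t0\<bar> + 1) * (1 + D)"
      using D by (simp add: D_def algebra_simps) (smt (verit) mult_nonneg_nonneg abs_ge_zero)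
    then have "(\<bar>x\<bar> + 1)\<^sup>2 \<le> ((\<bar>t0\<bar> + 1) * (1 + D))\<^sup>2" by (intro power_mono) auto
    then show ?thesis by (simp add: z_def y_def power_mult_distrib)
  qed
  have r2: "ln (1 + u / y) \<le> (1 + D)\<^sup>2 * ln (1 + u / z)"
  proof (cases "z \<le> y")
    case True
    have "ln (1 + u / y) \<le> ln (1 + u / z)" using True u y z
      by (subst ln_le_cancel_iff) (auto intro: add_pos_nonneg divide_left_mono)
    also have "\<dots> \<le> (1 + D)\<^sup>2 * ln (1 + u / z)"
    proof -
      have "1 \<le> (1 + D)\<^sup>2" using D by (simp add: one_le_power)
      then show ?thesis using Lx mult_right_mono[of 1 "(1 + D)\<^sup>2" "ln (1 + u / z)"] by simp
    qed
    finally show ?thesis .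
  next
    case False
    have "ln (1 + (z / y) * (u / z)) \<le> (z / y) * ln (1 + u / z)"
      using False y z u by (intro R2) auto
    also have "\<dots> \<le> (1 + D)\<^sup>2 * ln (1 + u / z)"
      using zy y Lx by (intro mult_right_mono) (auto simp: field_simps)
    finally show ?thesis using z by simp
  qed
  have "ln (1 + 4 * u / y) * exp (- (x - t0)\<^sup>2 / (2 * (1 / sqrt (real n))\<^sup>2))
      \<le> 4 * ((1 + D)\<^sup>2 * ln (1 + u / z)) * exp (- D\<^sup>2 / 2)"
    using r1 r2 E u y Lx by (intro mult_mono) auto
  also have "\<dots> = 4 * ln (1 + u / z) * ((1 + D)\<^sup>2 * exp (- D\<^sup>2 / 2))" by simp
  also have "\<dots> \<le> 4 * ln (1 + u / z) * 4" using R3[of D] Lx by (intro mult_left_mono) auto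
  finally show ?thesis by (simp add: u_def y_def z_def)
qed

lemma ennreal_ratio_bound:
  fixes a k M N :: ennreal
  assumes "a \<le> k * M"
  shows "a * (N / M) \<le> k * N"
proof (cases "M = 0")
  case True then show ?thesis using assms by simp
next
  case M0: False
  show ?thesis
  proof (cases "M = top")
    case True then show ?thesis by simp
  next
    case False
    have "a * (N / M) \<le> k * M * (N / M)" using assms by (rule mult_right_mono) simp
    also have "\<dots> = k * ((N * M) / M)" by (simp add: ennreal_times_divide mult_ac)
    also have "\<dots> = k * N" using ennreal_mult_divide_eq[OF M0 False] by simp
    finally show ?thesis .
  qed
qed

theorem mainTheorem9:
  shows "\<exists>C::real. C > 0 \<and>
    (\<forall>(n::nat) (t::real) (\<theta>\<^sub>0::real) (\<tau>::real). n \<ge> 1 \<longrightarrow> \<tau> > 0 \<longrightarrow>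
      (\<integral>\<^sup>+ x. ennreal (lik n \<theta>\<^sub>0 x) *
          post_expect n \<tau> (\<lambda>th. exp (t * sqrt (real n) * (th - x))) x \<partial>lborel)
      \<le> ennreal (C * (\<tau> * sqrt (real n)) / ln (1 + 4 * \<tau>\<^sup>2 / (\<bar>\<theta>\<^sub>0\<bar> + 1)\<^sup>2) * exp (t\<^sup>2 / 2)))"
proof (intro exI conjI allI impI)
  define C :: real where "C = 16 * exp 1 * pi\<^sup>2 / sqrt (2 * pi)"
  show "C > 0" by (simp add: C_def)
  fix n :: nat and t t0 \<tau> :: real
  assume n: "1 \<le> n" and tau: "0 < \<tau>"
  define L0 where "L0 = ln (1 + 4 * \<tau>\<^sup>2 / (\<bar>t0\<bar> + 1)\<^sup>2)"
  define K where "K = C * (\<tau> * sqrt (real n)) / L0"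
  define E2 where "E2 = exp (t\<^sup>2 / 2)"
  have sn: "0 < sqrt (real n)" using n by simp
  have L0: "0 < L0" unfolding L0_def using tau by (simp add: add_pos_nonneg)
  have K: "0 < K" unfolding K_def C_def using L0 tau sn by simp
  define N where "N = (\<lambda>x. \<integral>\<^sup>+th. ennreal (exp (t * sqrt (real n) * (th - x))) * hs_density \<tau> th * ennreal (lik n th x) \<partial>lborel)"
  have pt: "ennreal (lik n t0 x) * post_expect n \<tau> (\<lambda>th. exp (t * sqrt (real n) * (th - x))) x
      \<le> ennreal K * N x" for x
  proof -
    define Lx where "Lx = ln (1 + \<tau>\<^sup>2 / (\<bar>x\<bar> + 1)\<^sup>2)"
    define E where "E = exp (- (x - t0)\<^sup>2 / (2 * (1 / sqrt (real n))\<^sup>2))"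
    have l: "lik n t0 x = sqrt (real n) / sqrt (2 * pi) * E"
      unfolding lik_def normal_density_def E_def using sn
      by (simp add: real_sqrt_mult real_sqrt_divide power_divide)
    have key: "L0 * E \<le> 16 * Lx" unfolding L0_def E_def Lx_def by (rule real_key[OF n tau])
    have "lik n t0 x \<le> K * (exp (-1) / (pi\<^sup>2 * \<tau>) * Lx)"
    proof -
      have eq: "K * (exp (-1) / (pi\<^sup>2 * \<tau>) * Lx) = sqrt (real n) / sqrt (2 * pi) * (16 * Lx / L0)"
        unfolding K_def C_def using tau L0 by (simp add: field_simps exp_minus)
      have "E \<le> 16 * Lx / L0" using key L0 by (simp add: field_simps)
      then have "sqrt (real n) / sqrt (2 * pi) * E \<le> sqrt (real n) / sqrt (2 * pi) * (16 * Lx / L0)"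
        by (rule mult_left_mono) simp
      then show ?thesis unfolding l eq .
    qed
    then have "ennreal (lik n t0 x) \<le> ennreal (K * (exp (-1) / (pi\<^sup>2 * \<tau>) * Lx))"
      by (rule ennreal_leI)
    also have "\<dots> = ennreal K * ennreal (exp (-1) / (pi\<^sup>2 * \<tau>) * Lx)"
      using K by (intro ennreal_mult') simp
    also have "\<dots> \<le> ennreal K * (\<integral>\<^sup>+th. hs_density \<tau> th * ennreal (lik n th x) \<partial>lborel)"
      unfolding Lx_def by (intro mult_left_mono marg_lower[OF n tau]) simp
    finally show ?thesis unfolding post_expect_def N_def by (rule ennreal_ratio_bound)
  qed
  have "(\<integral>\<^sup>+ x. ennreal (lik n t0 x) * post_expect n \<tau> (\<lambda>th. exp (t * sqrt (real n) * (th - x))) x \<partial>lborel)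
     \<le> (\<integral>\<^sup>+ x. ennreal K * N x \<partial>lborel)"
    by (intro nn_integral_mono pt)
  also have "\<dots> = ennreal K * (\<integral>\<^sup>+ x. N x \<partial>lborel)"
    by (rule nn_integral_cmult) (unfold N_def lik_def normal_density_def, measurable)
  also have "(\<integral>\<^sup>+ x. N x \<partial>lborel) = (\<integral>\<^sup>+th. \<integral>\<^sup>+x. ennreal (exp (t * sqrt (real n) * (th - x))) * hs_density \<tau> th * ennreal (lik n th x) \<partial>lborel \<partial>lborel)"
    unfolding N_def by (rule lborel_pair.Fubini') (unfold lik_def normal_density_def, measurable)
  also have "\<dots> = (\<integral>\<^sup>+th. hs_density \<tau> th * ennreal E2 \<partial>lborel)"
  proof (rule nn_integral_cong)
    fix th :: real
    have "(\<integral>\<^sup>+x. ennreal (exp (t * sqrt (real n) * (th - x))) * hs_density \<tau> th * ennreal (lik n th x) \<partial>lborel)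
       = (\<integral>\<^sup>+x. hs_density \<tau> th * (ennreal (exp (t * sqrt (real n) * (th - x))) * ennreal (lik n th x)) \<partial>lborel)"
      by (simp add: mult_ac)
    also have "\<dots> = hs_density \<tau> th * (\<integral>\<^sup>+x. ennreal (exp (t * sqrt (real n) * (th - x))) * ennreal (lik n th x) \<partial>lborel)"
      by (rule nn_integral_cmult) (unfold lik_def normal_density_def, measurable)
    also have "\<dots> = hs_density \<tau> th * ennreal E2" unfolding E2_def by (simp add: mgf[OF n])
    finally show "(\<integral>\<^sup>+x. ennreal (exp (t * sqrt (real n) * (th - x))) * hs_density \<tau> th * ennreal (lik n th x) \<partial>lborel) = hs_density \<tau> th * ennreal E2" .
  qed
  also have "\<dots> = (\<integral>\<^sup>+th. hs_density \<tau> th \<partial>lborel) * ennreal E2"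
    by (rule nn_integral_multc) measurable
  finally have "(\<integral>\<^sup>+ x. ennreal (lik n t0 x) * post_expect n \<tau> (\<lambda>th. exp (t * sqrt (real n) * (th - x))) x \<partial>lborel)
     \<le> ennreal K * ((\<integral>\<^sup>+th. hs_density \<tau> th \<partial>lborel) * ennreal E2)" .
  also have "\<dots> \<le> ennreal K * (1 * ennreal E2)"
    by (intro mult_left_mono mult_right_mono hs_mass[OF tau]) auto
  also have "\<dots> = ennreal (K * E2)" using K by (simp add: ennreal_mult E2_def)
  finally show "(\<integral>\<^sup>+ x. ennreal (lik n t0 x) * post_expect n \<tau> (\<lambda>th. exp (t * sqrt (real n) * (th - x))) x \<partial>lborel)
      \<le> ennreal (C * (\<tau> * sqrt (real n)) / ln (1 + 4 * \<tau>\<^sup>2 / (\<bar>t0\<bar> + 1)\<^sup>2) * exp (t\<^sup>2 / 2))"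
    unfolding K_def L0_def E2_def .
qed

end
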